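(* In classical theory, with the bit as obit, the information content of every probability vector $\mathbf p=(p_1,\dots,p_d)$ equals its Shannon entropy: $I(\mathbf p)=H(\mathbf p)=-\sum_ip_i\log_2p_i$.
   Context: Classical theory as an OPT: a system is $\mathbb R^{d}$, states are substochastic vectors ($x_i\ge0$, $\sum_i x_i\le1$; normalized if the sum is 1), pure states are the basis vectors, effects are vectors with entries in $[0,1]$, transformations are substochastic matrices (channels: stochastic), parallel composition is the tensor product; the operational norm is the $\ell^1$ norm. A dilation of $\mathbf p$ is a joint probability vector on $\mathbb R^d\otimes\mathbb R^{d'}$ whose marginal is $\mathbf p$; a refinement of a state is a collection of substochastic vectors summing to it. Information content: a compression scheme is a pair of stochastic maps $\mathcal E:\mathbb R^{d^N}\to\mathbb R^{2^M}$, $\mathcal D:\mathbb R^{2^M}\to\mathbb R^{d^N}$; $E_{N,M,\varepsilon}(\mathbf p)$ is the set of schemes with $\sup_{d',\{\Psi_i\}}\sum_i\|((\mathcal D\mathcal E)\otimes I_{d'})\Psi_i-\Psi_i\|_1<\varepsilon$, over all ancillary dimensions $d'$ and refinements $\{\Psi_i\}$ of dilations of $\mathbf p^{\otimes N}$; $I(\mathbf p):=\lim_{\varepsilon\to0}\limsup_{N\to\infty}\min\{M:E_{N,M,\varepsilon}(\mathbf p)\ne\emptyset\}/N$. *)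

theory Defs
  imports "HOL-Analysis.Analysis"
begin

text \<open>Classical vectors in R^m are represented as functions nat => real, only the
entries with index < m being relevant. A vector on R^m (x) R^d' is a function of two
indices (i, j) with i < m, j < d'. Matrices are functions (row, column) => real.\<close>

definition prob_vec :: "nat \<Rightarrow> (nat \<Rightarrow> real) \<Rightarrow> bool" where
  "prob_vec d p \<longleftrightarrow> (\<forall>i<d. 0 \<le> p i) \<and> (\<Sum>i<d. p i) = 1"

definition shannon :: "nat \<Rightarrow> (nat \<Rightarrow> real) \<Rightarrow> real" where
  "shannon d p = - (\<Sum>i\<in>{i. i < d \<and> p i \<noteq> 0}. p i * log 2 (p i))"

text \<open>N-fold tensor power of p: index k < d^N encodes the tuple of its base-d digits.\<close>
definition tpow :: "nat \<Rightarrow> nat \<Rightarrow> (nat \<Rightarrow> real) \<Rightarrow> nat \<Rightarrow> real" where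
  "tpow d N p k = (\<Prod>t<N. p (k div d ^ t mod d))"

text \<open>Stochastic map R^m -> R^n as an n x m column-stochastic matrix C (C l k).\<close>
definition stochastic :: "nat \<Rightarrow> nat \<Rightarrow> (nat \<Rightarrow> nat \<Rightarrow> real) \<Rightarrow> bool" where
  "stochastic m n C \<longleftrightarrow> (\<forall>k<m. \<forall>l<n. 0 \<le> C l k) \<and> (\<forall>k<m. (\<Sum>l<n. C l k) = 1)"

definition mat_comp :: "nat \<Rightarrow> (nat \<Rightarrow> nat \<Rightarrow> real) \<Rightarrow> (nat \<Rightarrow> nat \<Rightarrow> real) \<Rightarrow> nat \<Rightarrow> nat \<Rightarrow> real" where
  "mat_comp n D E i k = (\<Sum>l<n. D i l * E l k)"

text \<open>(C (x) I_d') applied to a bipartite vector; m is the input dimension of C.\<close>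
definition apply_local :: "nat \<Rightarrow> (nat \<Rightarrow> nat \<Rightarrow> real) \<Rightarrow> (nat \<Rightarrow> nat \<Rightarrow> real) \<Rightarrow> nat \<Rightarrow> nat \<Rightarrow> real" where
  "apply_local m C P i j = (\<Sum>k<m. C i k * P k j)"

definition l1_norm2 :: "nat \<Rightarrow> nat \<Rightarrow> (nat \<Rightarrow> nat \<Rightarrow> real) \<Rightarrow> real" where
  "l1_norm2 m d' P = (\<Sum>i<m. \<Sum>j<d'. \<bar>P i j\<bar>)"

definition is_dilation :: "nat \<Rightarrow> nat \<Rightarrow> (nat \<Rightarrow> real) \<Rightarrow> (nat \<Rightarrow> nat \<Rightarrow> real) \<Rightarrow> bool" where
  "is_dilation m d' q Psi \<longleftrightarrow> (\<forall>i<m. \<forall>j<d'. 0 \<le> Psi i j) \<and>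
     (\<Sum>i<m. \<Sum>j<d'. Psi i j) = 1 \<and> (\<forall>i<m. (\<Sum>j<d'. Psi i j) = q i)"

definition is_refinement :: "nat \<Rightarrow> nat \<Rightarrow> (nat \<Rightarrow> nat \<Rightarrow> real) \<Rightarrow> (nat \<Rightarrow> nat \<Rightarrow> real) list \<Rightarrow> bool" where
  "is_refinement m d' Psi Ps \<longleftrightarrow>
     (\<forall>P\<in>set Ps. (\<forall>i<m. \<forall>j<d'. 0 \<le> P i j) \<and> (\<Sum>i<m. \<Sum>j<d'. P i j) \<le> 1) \<and>
     (\<forall>i<m. \<forall>j<d'. (\<Sum>P\<leftarrow>Ps. P i j) = Psi i j)"

text \<open>(E, D) belongs to E_{N,M,eps}(p); the supremum being < eps is written as
  the existence of a bound c < eps on all the quantities in the supremum.\<close>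
definition scheme_ok :: "nat \<Rightarrow> (nat \<Rightarrow> real) \<Rightarrow> nat \<Rightarrow> nat \<Rightarrow> real \<Rightarrow>
    (nat \<Rightarrow> nat \<Rightarrow> real) \<Rightarrow> (nat \<Rightarrow> nat \<Rightarrow> real) \<Rightarrow> bool" where
  "scheme_ok d p N M eps E D \<longleftrightarrow>
     stochastic (d ^ N) (2 ^ M) E \<and> stochastic (2 ^ M) (d ^ N) D \<and>
     (\<exists>c<eps. \<forall>d' Psi Ps. is_dilation (d ^ N) d' (tpow d N p) Psi \<and>
        is_refinement (d ^ N) d' Psi Ps \<longrightarrow>
        (\<Sum>P\<leftarrow>Ps. l1_norm2 (d ^ N) d'
            (\<lambda>i j. apply_local (d ^ N) (mat_comp (2 ^ M) D E) P i j - P i j)) \<le> c)"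

definition min_bits :: "nat \<Rightarrow> (nat \<Rightarrow> real) \<Rightarrow> nat \<Rightarrow> real \<Rightarrow> nat" where
  "min_bits d p N eps = (LEAST M. \<exists>E D. scheme_ok d p N M eps E D)"

text \<open>I(p) = lim_{eps->0+} limsup_N min_bits/N; we state convergence directly.\<close>
definition info_rate :: "nat \<Rightarrow> (nat \<Rightarrow> real) \<Rightarrow> real \<Rightarrow> ereal" where
  "info_rate d p eps = limsup (\<lambda>N. ereal (real (min_bits d p N eps) / real N))"

end

theory Submission
  imports Defs
begin


lemma aux_lt: "(a::nat) < d \<Longrightarrow> b < m \<Longrightarrow> a + b * d < d * m"
proof -
  assume a: "a < d" and b: "b < m"
  have "a + b*d < d + b*d" using a by simp
  also have "\<dots> = (b+1)*d" by simp
  also have "\<dots> \<le> m*d" using b by (intro mult_le_mono1) simp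
  finally show ?thesis by (simp add: mult.commute)
qed

lemma sum_split_div_mod:
  fixes d m :: nat and F G :: "nat \<Rightarrow> real"
  assumes "0 < d"
  shows "(\<Sum>k<d*m. F (k mod d) * G (k div d)) = (\<Sum>a<d. F a) * (\<Sum>b<m. G b)"
proof -
  have "(\<Sum>k<d*m. F (k mod d) * G (k div d)) = (\<Sum>(a,b)\<in>{..<d}\<times>{..<m}. F a * G b)"
    apply (rule sum.reindex_bij_witness[where i="\<lambda>(a,b). a + d*b" and j="\<lambda>k. (k mod d, k div d)"])
    using assms apply (auto simp: less_mult_imp_div_less mult.commute aux_lt)
    done
  also have "\<dots> = (\<Sum>a<d. F a) * (\<Sum>b<m. G b)"
    by (simp add: sum_product sum.cartesian_product)
  finally show ?thesis .
qed

lemma digits_sum: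
  fixes d N :: nat and f :: "nat \<Rightarrow> real"
  assumes "0 < d"
  shows "(\<Sum>k<d^N. \<Prod>t<N. f (k div d ^ t mod d)) = (\<Sum>i<d. f i) ^ N"
proof (induction N)
  case 0 then show ?case by simp
next
  case (Suc N)
  have "(\<Sum>k<d^Suc N. \<Prod>t<Suc N. f (k div d ^ t mod d))
      = (\<Sum>k<d*d^N. f (k mod d) * (\<Prod>t<N. f ((k div d) div d ^ t mod d)))"
    by (simp only: power_Suc prod.lessThan_Suc_shift) (simp add: div_mult2_eq)
  also have "\<dots> = (\<Sum>a<d. f a) * (\<Sum>b<d^N. \<Prod>t<N. f (b div d ^ t mod d))"
    by (rule sum_split_div_mod[OF assms])
  finally show ?case using Suc by simp
qed

lemma tpow_powr_sum:
  assumes "0 < d" "\<forall>i<d. 0 \<le> p i"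
  shows "(\<Sum>k<d^N. tpow d N p k powr a) = (\<Sum>i<d. p i powr a) ^ N"
proof -
  have "(\<Sum>k<d^N. tpow d N p k powr a) = (\<Sum>k<d^N. \<Prod>t<N. p (k div d ^ t mod d) powr a)"
    unfolding tpow_def using assms
    by (auto intro!: sum.cong prod_powr_distrib)
  then show ?thesis using digits_sum[OF assms(1), of "\<lambda>i. p i powr a"] by simp
qed

lemma tpow_nonneg: "0 < d \<Longrightarrow> \<forall>i<d. 0 \<le> p i \<Longrightarrow> 0 \<le> tpow d N p k"
  unfolding tpow_def by (auto intro!: prod_nonneg)

lemma tpow_sum: "prob_vec d p \<Longrightarrow> 0 < d \<Longrightarrow> (\<Sum>k<d^N. tpow d N p k) = 1"
  unfolding prob_vec_def tpow_def using digits_sum[of d p N] by simp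



lemma success_from_scheme:
  assumes pv: "prob_vec d p" and d0: "0 < d" and ok: "scheme_ok d p N M eps E D"
  shows "1 - eps < (\<Sum>k<d^N. tpow d N p k * mat_comp (2^M) D E k k)"
proof -
  define n where "n = d^N"
  define q where "q = tpow d N p"
  define C where "C = mat_comp (2^M) D E"
  have qnn: "\<And>k. 0 \<le> q k" unfolding q_def using pv d0 by (intro tpow_nonneg) (auto simp: prob_vec_def)
  have qs: "(\<Sum>k<n. q k) = 1" unfolding q_def n_def using tpow_sum[OF pv d0] by simp
  have qle: "\<And>k. k < n \<Longrightarrow> q k \<le> 1"
  proof -
    fix k assume "k < n"
    then have "q k \<le> (\<Sum>k<n. q k)" using qnn by (intro member_le_sum) auto
    then show "q k \<le> 1" using qs by simp
  qed
  obtain c where c: "c < eps" and call: "\<And>d' Psi Ps. is_dilation n d' q Psi \<and>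
        is_refinement n d' Psi Ps \<Longrightarrow>
        (\<Sum>P\<leftarrow>Ps. l1_norm2 n d' (\<lambda>i j. apply_local n C P i j - P i j)) \<le> c"
    using ok unfolding scheme_ok_def n_def q_def C_def by blast
  define Pk where "Pk = (\<lambda>k::nat. \<lambda>i (j::nat). if i = k then q k else 0)"
  define Ps where "Ps = map Pk [0..<n]"
  define Psi where "Psi = (\<lambda>i (j::nat). q i)"
  have dil: "is_dilation n 1 q Psi" unfolding is_dilation_def Psi_def using qnn qs by simp
  have sl: "\<And>i j. i < n \<Longrightarrow> (\<Sum>P\<leftarrow>Ps. P i j) = q i"
  proof -
    fix i j assume i: "i < n"
    have "(\<Sum>P\<leftarrow>Ps. P i j) = (\<Sum>k\<leftarrow>[0..<n]. Pk k i j)" unfolding Ps_def by (simp add: o_def)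
    also have "\<dots> = (\<Sum>k\<in>{0..<n}. Pk k i j)" by (metis sum_set_upt_conv_sum_list_nat set_upt)
    also have "\<dots> = q i" unfolding Pk_def using i by simp
    finally show "(\<Sum>P\<leftarrow>Ps. P i j) = q i" .
  qed
  have elt: "\<And>P. P \<in> set Ps \<Longrightarrow> (\<forall>i<n. \<forall>j<1. 0 \<le> P i j) \<and> (\<Sum>i<n. \<Sum>j<1. P i j) \<le> 1"
  proof -
    fix P assume "P \<in> set Ps"
    then obtain k where k: "k < n" and P: "P = Pk k" unfolding Ps_def by auto
    have "(\<Sum>i<n. \<Sum>j<1. P i j) = q k" unfolding P Pk_def using k by simp
    then show "(\<forall>i<n. \<forall>j<1. 0 \<le> P i j) \<and> (\<Sum>i<n. \<Sum>j<1. P i j) \<le> 1"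
      using qle k qnn unfolding P Pk_def by simp
  qed
  have ref: "is_refinement n 1 Psi Ps"
    unfolding is_refinement_def using elt sl unfolding Psi_def by auto
  have e1: "(\<Sum>P\<leftarrow>Ps. l1_norm2 n 1 (\<lambda>i j. apply_local n C P i j - P i j)) \<le> c"
    using call dil ref by blast
  have e2: "(\<Sum>P\<leftarrow>Ps. l1_norm2 n 1 (\<lambda>i j. apply_local n C P i j - P i j))
      = (\<Sum>k<n. l1_norm2 n 1 (\<lambda>i j. apply_local n C (Pk k) i j - Pk k i j))"
    unfolding Ps_def by (simp add: o_def sum_set_upt_conv_sum_list_nat[symmetric] atLeast0LessThan)
  have e3: "\<And>k. k < n \<Longrightarrow> q k - q k * C k k \<le> l1_norm2 n 1 (\<lambda>i j. apply_local n C (Pk k) i j - Pk k i j)"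
  proof -
    fix k assume k: "k < n"
    have al: "\<And>i j. apply_local n C (Pk k) i j = C i k * q k"
      unfolding apply_local_def Pk_def using k by (simp add: if_distrib cong: if_cong)
    have "q k - q k * C k k \<le> \<bar>C k k * q k - q k\<bar>" by (simp add: algebra_simps)
    also have "\<dots> \<le> (\<Sum>i<n. \<bar>C i k * q k - (if i = k then q k else 0)\<bar>)"
      using k member_le_sum[of k "{..<n}" "\<lambda>i. \<bar>C i k * q k - (if i = k then q k else 0)\<bar>"] by simp
    also have "\<dots> = l1_norm2 n 1 (\<lambda>i j. apply_local n C (Pk k) i j - Pk k i j)"
      unfolding l1_norm2_def
    proof (rule sum.cong[OF refl])
      fix i
      have "(\<Sum>j<1. \<bar>apply_local n C (Pk k) i j - Pk k i j\<bar>) = \<bar>apply_local n C (Pk k) i 0 - Pk k i 0\<bar>" by simp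
      also have "\<dots> = \<bar>C i k * q k - Pk k i 0\<bar>" by (simp only: al)
      also have "\<dots> = \<bar>C i k * q k - (if i = k then q k else 0)\<bar>" by (simp add: Pk_def)
      finally show "\<bar>C i k * q k - (if i = k then q k else 0)\<bar> = (\<Sum>j<1. \<bar>apply_local n C (Pk k) i j - Pk k i j\<bar>)" by simp
    qed
    finally show "q k - q k * C k k \<le> l1_norm2 n 1 (\<lambda>i j. apply_local n C (Pk k) i j - Pk k i j)" .
  qed
  have "(\<Sum>k<n. q k - q k * C k k) \<le> (\<Sum>k<n. l1_norm2 n 1 (\<lambda>i j. apply_local n C (Pk k) i j - Pk k i j))"
    by (rule sum_mono) (rule e3, simp)
  then have "(\<Sum>k<n. q k - q k * C k k) \<le> c" using e1 e2 by linarith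
  then have "1 - (\<Sum>k<n. q k * C k k) \<le> c" by (simp add: sum_subtractf qs)
  then show ?thesis using c unfolding n_def q_def C_def by linarith
qed



lemma stoch_le1:
  assumes "stochastic m n C" "k < m" "l < n"
  shows "C l k \<le> 1"
proof -
  have "C l k \<le> (\<Sum>l'<n. C l' k)" using assms unfolding stochastic_def
    by (intro member_le_sum) auto
  then show ?thesis using assms unfolding stochastic_def by simp
qed

lemma success_le:
  assumes E: "stochastic n m E" and D: "stochastic m n D" and qnn: "\<forall>k<n. 0 \<le> q k" and tau: "0 < \<tau>"
  shows "(\<Sum>k<n. q k * mat_comp m D E k k) \<le> (\<Sum>k<n. if \<tau> < q k then q k else 0) + \<tau> * m"
proof -
  have Cnn: "0 \<le> mat_comp m D E k k" if "k < n" for k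
    unfolding mat_comp_def using D E that unfolding stochastic_def by (auto intro!: sum_nonneg)
  have C1: "mat_comp m D E k k \<le> 1" if k: "k < n" for k
  proof -
    have "mat_comp m D E k k \<le> (\<Sum>l<m. E l k)" unfolding mat_comp_def
      using D E k stoch_le1[OF D, of _ k] unfolding stochastic_def
      by (intro sum_mono) (auto intro!: mult_left_le_one_le)
    then show ?thesis using E k unfolding stochastic_def by simp
  qed
  have Csum: "(\<Sum>k<n. mat_comp m D E k k) \<le> m"
  proof -
    have "(\<Sum>k<n. mat_comp m D E k k) = (\<Sum>l<m. \<Sum>k<n. D k l * E l k)"
      unfolding mat_comp_def by (rule sum.swap)
    also have "\<dots> \<le> (\<Sum>l<m. \<Sum>k<n. D k l)"
      using D E stoch_le1[OF E] unfolding stochastic_def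
      by (intro sum_mono) (auto intro!: mult_right_le_one_le)
    also have "\<dots> = m" using D unfolding stochastic_def by simp
    finally show ?thesis .
  qed
  have pt: "q k * mat_comp m D E k k \<le> (if \<tau> < q k then q k else 0) + \<tau> * mat_comp m D E k k"
    if k: "k < n" for k
  proof (cases "\<tau> < q k")
    case True
    have "q k * mat_comp m D E k k \<le> q k" using C1[OF k] qnn k Cnn[OF k] by (simp add: mult_right_le_one_le)
    moreover have "0 \<le> \<tau> * mat_comp m D E k k" using Cnn[OF k] tau by simp
    ultimately show ?thesis using True by simp
  next
    case False
    then show ?thesis using Cnn[OF k] by (simp add: mult_right_mono)
  qed
  have "(\<Sum>k<n. q k * mat_comp m D E k k) \<le> (\<Sum>k<n. (if \<tau> < q k then q k else 0) + \<tau> * mat_comp m D E k k)"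
    using pt by (intro sum_mono) auto
  also have "\<dots> = (\<Sum>k<n. if \<tau> < q k then q k else 0) + \<tau> * (\<Sum>k<n. mat_comp m D E k k)"
    by (simp add: sum.distrib sum_distrib_left)
  also have "\<dots> \<le> (\<Sum>k<n. if \<tau> < q k then q k else 0) + \<tau> * m"
    using Csum tau by simp
  finally show ?thesis .
qed

lemma tail_le:
  fixes q :: "nat \<Rightarrow> real"
  assumes tau: "0 < \<tau>" and s: "0 < s" and qnn: "\<forall>k<n. 0 \<le> q k"
  shows "(\<Sum>k<n. if \<tau> < q k then q k else 0) \<le> \<tau> powr (-s) * (\<Sum>k<n. q k powr (1+s))"
proof -
  have pt: "(if \<tau> < q k then q k else 0) \<le> \<tau> powr (-s) * q k powr (1+s)" if k: "k < n" for k
  proof (cases "\<tau> < q k")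
    case True
    then have qp: "0 < q k" using tau by linarith
    have "q k = q k * (\<tau> powr (-s) * \<tau> powr s)" using tau by (simp add: powr_add[symmetric])
    also have "\<dots> \<le> q k * (\<tau> powr (-s) * q k powr s)"
      using True tau s qp by (intro mult_left_mono powr_mono2) auto
    also have "\<dots> = \<tau> powr (-s) * q k powr (1+s)" using qp by (simp add: powr_add)
    finally show ?thesis using True by simp
  next
    case False then show ?thesis by simp
  qed
  show ?thesis unfolding sum_distrib_left using pt by (intro sum_mono) auto
qed

lemma ltail_le:
  fixes q :: "nat \<Rightarrow> real"
  assumes tau: "0 < \<tau>" and s: "0 < s" and qnn: "\<forall>k<n. 0 \<le> q k"
  shows "(\<Sum>k<n. if q k < \<tau> then q k else 0) \<le> \<tau> powr s * (\<Sum>k<n. q k powr (1-s))"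
proof -
  have pt: "(if q k < \<tau> then q k else 0) \<le> \<tau> powr s * q k powr (1-s)" if k: "k < n" for k
  proof (cases "q k < \<tau> \<and> 0 < q k")
    case True
    then have qp: "0 < q k" by simp
    have "q k = q k powr s * q k powr (1-s)" using qp by (simp add: powr_add[symmetric])
    also have "\<dots> \<le> \<tau> powr s * q k powr (1-s)"
      using True tau s qp by (intro mult_right_mono powr_mono2) auto
    finally show ?thesis using True by simp
  next
    case False then show ?thesis using qnn k by auto
  qed
  show ?thesis unfolding sum_distrib_left using pt by (intro sum_mono) auto
qed



lemma sum_list_sum_swap:
  "(\<Sum>P\<leftarrow>Ps. \<Sum>m\<in>A. f P m) = (\<Sum>m\<in>A. \<Sum>P\<leftarrow>Ps. f P m)"
  by (induction Ps) (auto simp: sum.distrib)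

lemma stoch_comp:
  assumes E: "stochastic n m E" and D: "stochastic m n D"
  shows "stochastic n n (mat_comp m D E)"
  unfolding stochastic_def
proof (intro conjI allI impI)
  fix k l assume "k < n" "l < n"
  then show "0 \<le> mat_comp m D E l k" unfolding mat_comp_def using D E unfolding stochastic_def
    by (auto intro!: sum_nonneg)
next
  fix k assume k: "k < n"
  have "(\<Sum>l<n. mat_comp m D E l k) = (\<Sum>j<m. (\<Sum>l<n. D l j) * E j k)"
    unfolding mat_comp_def by (subst sum.swap) (simp add: sum_distrib_right)
  also have "\<dots> = (\<Sum>j<m. E j k)" using D unfolding stochastic_def by simp
  also have "\<dots> = 1" using E k unfolding stochastic_def by simp
  finally show "(\<Sum>l<n. mat_comp m D E l k) = 1" .
qed

lemma w_eq:
  assumes C: "stochastic n n C" and m: "m < n"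
  shows "(\<Sum>i<n. \<bar>C i m - (if i = m then 1 else 0)\<bar>) = 2 * (1 - C m m)"
proof -
  have cnn: "\<And>i. i < n \<Longrightarrow> 0 \<le> C i m" using C m unfolding stochastic_def by auto
  have c1: "C m m \<le> 1" using C m unfolding stochastic_def
    using member_le_sum[of m "{..<n}" "\<lambda>i. C i m"] by auto
  have "(\<Sum>i<n. \<bar>C i m - (if i = m then 1 else 0)\<bar>)
      = (\<Sum>i<n. C i m) - C m m + (1 - C m m)"
  proof -
    have "(\<Sum>i<n. \<bar>C i m - (if i = m then 1 else 0)\<bar>) = (\<Sum>i<n. (C i m - (if i = m then C m m else 0)) + (if i = m then 1 - C m m else 0))"
      using cnn c1 by (intro sum.cong) auto
    also have "\<dots> = (\<Sum>i<n. C i m) - C m m + (1 - C m m)"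
      using m by (simp add: sum.distrib sum_subtractf)
    finally show ?thesis .
  qed
  also have "\<dots> = 2 * (1 - C m m)" using C m unfolding stochastic_def by simp
  finally show ?thesis .
qed

lemma err_bound:
  assumes C: "stochastic n n C" and dil: "is_dilation n d' q Psi" and ref: "is_refinement n d' Psi Ps"
  shows "(\<Sum>P\<leftarrow>Ps. l1_norm2 n d' (\<lambda>i j. apply_local n C P i j - P i j))
         \<le> (\<Sum>m<n. q m * (2 * (1 - C m m)))"
proof -
  define w where "w m = (\<Sum>i<n. \<bar>C i m - (if i = m then 1 else 0)\<bar>)" for m
  have perP: "l1_norm2 n d' (\<lambda>i j. apply_local n C P i j - P i j) \<le> (\<Sum>m<n. (\<Sum>j<d'. P m j) * w m)"
    if Pin: "P \<in> set Ps" for P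
  proof -
    have Pnn: "\<And>m j. m < n \<Longrightarrow> j < d' \<Longrightarrow> 0 \<le> P m j" using ref Pin unfolding is_refinement_def by auto
    have "l1_norm2 n d' (\<lambda>i j. apply_local n C P i j - P i j)
        = (\<Sum>i<n. \<Sum>j<d'. \<bar>\<Sum>m<n. (C i m - (if i = m then 1 else 0)) * P m j\<bar>)"
      unfolding l1_norm2_def apply_local_def
    proof (intro sum.cong refl)
      fix i j assume i: "i \<in> {..<n}"
      have "(\<Sum>m<n. (C i m - (if i = m then 1 else 0)) * P m j)
          = (\<Sum>m<n. C i m * P m j) - (\<Sum>m<n. (if i = m then 1 else 0) * P m j)"
        by (simp add: left_diff_distrib sum_subtractf)
      also have "(\<Sum>m<n. (if i = m then 1 else 0) * P m j) = P i j"
        using i by (simp add: of_bool_def[symmetric])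
      finally show "\<bar>(\<Sum>k<n. C i k * P k j) - P i j\<bar> = \<bar>\<Sum>m<n. (C i m - (if i = m then 1 else 0)) * P m j\<bar>"
        by simp
    qed
    also have "\<dots> \<le> (\<Sum>i<n. \<Sum>j<d'. \<Sum>m<n. \<bar>C i m - (if i = m then 1 else 0)\<bar> * P m j)"
      using Pnn by (intro sum_mono order.trans[OF sum_abs]) (auto simp: abs_mult)
    also have "\<dots> = (\<Sum>i<n. \<Sum>m<n. \<Sum>j<d'. \<bar>C i m - (if i = m then 1 else 0)\<bar> * P m j)"
      by (intro sum.cong refl sum.swap)
    also have "\<dots> = (\<Sum>m<n. \<Sum>i<n. \<Sum>j<d'. \<bar>C i m - (if i = m then 1 else 0)\<bar> * P m j)"
      by (rule sum.swap)
    also have "\<dots> = (\<Sum>m<n. w m * (\<Sum>j<d'. P m j))"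
      unfolding w_def by (simp only: sum_product)
    also have "\<dots> = (\<Sum>m<n. (\<Sum>j<d'. P m j) * w m)"
      by (simp add: mult.commute)
    finally show ?thesis .
  qed
  have "(\<Sum>P\<leftarrow>Ps. l1_norm2 n d' (\<lambda>i j. apply_local n C P i j - P i j))
      \<le> (\<Sum>P\<leftarrow>Ps. \<Sum>m<n. (\<Sum>j<d'. P m j) * w m)"
    using perP by (intro sum_list_mono) auto
  also have "\<dots> = (\<Sum>m<n. \<Sum>P\<leftarrow>Ps. (\<Sum>j<d'. P m j) * w m)" by (rule sum_list_sum_swap)
  also have "\<dots> = (\<Sum>m<n. (\<Sum>j<d'. \<Sum>P\<leftarrow>Ps. P m j) * w m)"
    by (simp add: sum_list_mult_const sum_list_sum_swap)
  also have "\<dots> = (\<Sum>m<n. q m * w m)"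
    using ref dil unfolding is_refinement_def is_dilation_def by (intro sum.cong) auto
  also have "\<dots> = (\<Sum>m<n. q m * (2 * (1 - C m m)))"
    unfolding w_def using w_eq[OF C] by simp
  finally show ?thesis .
qed



lemma scheme_exists:
  assumes pv: "prob_vec d p" and d0: "0 < d" and S: "S \<subseteq> {..<d^N}" and cS: "card S \<le> 2^M"
    and small: "2 * (\<Sum>k<d^N. if k \<notin> S then tpow d N p k else 0) < eps"
  shows "\<exists>E D. scheme_ok d p N M eps E D"
proof -
  define n where "n = d^N"
  define m :: nat where "m = 2^M"
  define q where "q = tpow d N p"
  have n0: "0 < n" unfolding n_def using d0 by simp
  have m0: "0 < m" unfolding m_def by simp
  have qnn: "\<And>k. 0 \<le> q k" unfolding q_def using pv d0 by (intro tpow_nonneg) (auto simp: prob_vec_def)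
  have fS: "finite S" using S finite_subset by blast
  obtain g where g: "g ` S \<subseteq> {..<m}" and inj: "inj_on g S"
    using card_le_inj[OF fS, of "{..<m}"] cS unfolding m_def by auto
  define E where "E = (\<lambda>l k. if k \<in> S then (if l = g k then 1 else 0) else (if l = 0 then 1 else (0::real)))"
  define D where "D = (\<lambda>i l. if l \<in> g ` S then (if i = the_inv_into S g l then 1 else 0) else (if i = 0 then 1 else (0::real)))"
  have sE: "stochastic n m E" unfolding stochastic_def
  proof (intro conjI allI impI)
    fix k l show "0 \<le> E l k" unfolding E_def by auto
  next
    fix k assume "k < n"
    show "(\<Sum>l<m. E l k) = 1"
    proof (cases "k \<in> S")
      case True
      then have "g k < m" using g by auto
      then show ?thesis unfolding E_def using True by (simp add: of_bool_def[symmetric])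
    next
      case False
      then show ?thesis unfolding E_def using m0 by (simp add: of_bool_def[symmetric])
    qed
  qed
  have sD: "stochastic m n D" unfolding stochastic_def
  proof (intro conjI allI impI)
    fix k l show "0 \<le> D l k" unfolding D_def by auto
  next
    fix l assume "l < m"
    show "(\<Sum>i<n. D i l) = 1"
    proof (cases "l \<in> g ` S")
      case True
      then have "the_inv_into S g l \<in> S" using inj by (auto simp: the_inv_into_f_f)
      then have "the_inv_into S g l < n" using S unfolding n_def by auto
      then show ?thesis unfolding D_def using True by (simp add: of_bool_def[symmetric])
    next
      case False
      then show ?thesis unfolding D_def using n0 by (simp add: of_bool_def[symmetric])
    qed
  qed
  define C where "C = mat_comp m D E"
  have sC: "stochastic n n C" unfolding C_def by (rule stoch_comp[OF sE sD])
  have CS: "C k k = 1" if k: "k \<in> S" for k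
  proof -
    have gk: "g k < m" using g k by auto
    have "C k k = (\<Sum>l<m. D k l * (if l = g k then 1 else 0))" unfolding C_def mat_comp_def E_def using k by simp
    also have "\<dots> = D k (g k)" using gk by (simp add: if_distrib cong: if_cong)
    also have "\<dots> = 1" unfolding D_def using k inj by (simp add: the_inv_into_f_f)
    finally show ?thesis .
  qed
  define c where "c = 2 * (\<Sum>k<n. if k \<notin> S then q k else 0)"
  have "\<forall>d' Psi Ps. is_dilation n d' q Psi \<and> is_refinement n d' Psi Ps \<longrightarrow>
        (\<Sum>P\<leftarrow>Ps. l1_norm2 n d' (\<lambda>i j. apply_local n C P i j - P i j)) \<le> c"
  proof (intro allI impI)
    fix d' Psi Ps assume a: "is_dilation n d' q Psi \<and> is_refinement n d' Psi Ps"
    have "(\<Sum>P\<leftarrow>Ps. l1_norm2 n d' (\<lambda>i j. apply_local n C P i j - P i j)) \<le> (\<Sum>k<n. q k * (2 * (1 - C k k)))"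
      using err_bound[OF sC] a by blast
    also have "\<dots> \<le> (\<Sum>k<n. 2 * (if k \<notin> S then q k else 0))"
    proof (intro sum_mono)
      fix k assume k: "k \<in> {..<n}"
      have "0 \<le> C k k" using sC k unfolding stochastic_def by auto
      then show "q k * (2 * (1 - C k k)) \<le> 2 * (if k \<notin> S then q k else 0)"
        using CS qnn[of k] by (auto simp: mult_left_le_one_le algebra_simps)
    qed
    also have "\<dots> = c" unfolding c_def by (simp add: sum_distrib_left)
    finally show "(\<Sum>P\<leftarrow>Ps. l1_norm2 n d' (\<lambda>i j. apply_local n C P i j - P i j)) \<le> c" .
  qed
  moreover have "c < eps" using small unfolding c_def n_def q_def .
  ultimately have "scheme_ok d p N M eps E D"
    unfolding scheme_ok_def using sE sD unfolding n_def m_def q_def C_def by blast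
  then show ?thesis by blast
qed



lemma F_deriv:
  assumes pv: "prob_vec d p"
  shows "((\<lambda>t. (\<Sum>i<d. p i powr (1+t)) * 2 powr (t*K)) has_real_derivative ((K - shannon d p) * ln 2)) (at 0)"
proof -
  define Sp where "Sp = {i. i < d \<and> p i \<noteq> 0}"
  have pos: "0 < p i" if i: "i \<in> Sp" for i
  proof -
    have "i < d" "p i \<noteq> 0" using i unfolding Sp_def by auto
    moreover have "\<forall>i<d. 0 \<le> p i" using pv unfolding prob_vec_def by simp
    ultimately show ?thesis by force
  qed
  have fin: "finite Sp" unfolding Sp_def by simp
  have eq: "(\<Sum>i<d. p i powr (1+t)) = (\<Sum>i\<in>Sp. p i powr (1+t))" for t
    unfolding Sp_def by (rule sum.mono_neutral_right) auto
  have dA: "((\<lambda>t. \<Sum>i\<in>Sp. p i powr (1+t)) has_real_derivative (\<Sum>i\<in>Sp. p i powr (1+0) * ln (p i))) (at 0)"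
    by (rule DERIV_sum, rule derivative_eq_intros, auto intro!: derivative_eq_intros simp: pos)
  have A0: "(\<Sum>i\<in>Sp. p i powr (1+0)) = 1"
  proof -
    have "(\<Sum>i\<in>Sp. p i powr (1+0)) = (\<Sum>i<d. p i powr (1+0))" using eq[of 0] by simp
    also have "\<dots> = (\<Sum>i<d. p i)" using pv unfolding prob_vec_def by (intro sum.cong) auto
    finally show ?thesis using pv unfolding prob_vec_def by simp
  qed
  have H: "(\<Sum>i\<in>Sp. p i powr (1+0) * ln (p i)) = - shannon d p * ln 2"
  proof -
    have "(\<Sum>i\<in>Sp. p i powr (1+0) * ln (p i)) = (\<Sum>i\<in>Sp. p i * log 2 (p i) * ln 2)"
      by (intro sum.cong refl) (simp add: log_def pos abs_of_pos)
    also have "\<dots> = - shannon d p * ln 2" unfolding shannon_def Sp_def by (simp add: sum_distrib_right)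
    finally show ?thesis .
  qed
  have d2: "((\<lambda>t. 2 powr (t*K)) has_real_derivative (2 powr (0*K) * (K * ln 2))) (at 0)"
    by (auto intro!: derivative_eq_intros)
  have "((\<lambda>t. (\<Sum>i\<in>Sp. p i powr (1+t)) * 2 powr (t*K)) has_real_derivative
     ((\<Sum>i\<in>Sp. p i powr (1+0)) * (2 powr (0*K) * (K * ln 2)) + (\<Sum>i\<in>Sp. p i powr (1+0) * ln (p i)) * 2 powr (0*K))) (at 0)"
    by (rule DERIV_mult'[OF dA d2])
  then have "((\<lambda>t. (\<Sum>i\<in>Sp. p i powr (1+t)) * 2 powr (t*K)) has_real_derivative ((K - shannon d p) * ln 2)) (at 0)"
    by (simp only: A0 H) (simp add: algebra_simps)
  then show ?thesis by (simp only: eq)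
qed

lemma F_zero: "prob_vec d p \<Longrightarrow> (\<Sum>i<d. p i powr (1+0)) * 2 powr (0*K) = 1"
  unfolding prob_vec_def by (simp)

lemma exist_s_conv:
  assumes pv: "prob_vec d p" and dl: "0 < \<delta>"
  shows "\<exists>s>0. (\<Sum>i<d. p i powr (1+s)) * 2 powr (s*(shannon d p - \<delta>)) < 1"
proof -
  have "(shannon d p - \<delta> - shannon d p) * ln 2 < 0" using dl by simp
  from DERIV_neg_dec_right[OF F_deriv[OF pv] this] obtain e where e: "e > 0"
    and h: "\<And>h. h > 0 \<Longrightarrow> h < e \<Longrightarrow> (\<Sum>i<d. p i powr (1+(0+h))) * 2 powr ((0+h)*(shannon d p - \<delta>)) <
       (\<Sum>i<d. p i powr (1+0)) * 2 powr (0*(shannon d p - \<delta>))" by blast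
  have "(\<Sum>i<d. p i powr (1+e/2)) * 2 powr ((e/2)*(shannon d p - \<delta>)) < 1"
    using h[of "e/2"] e F_zero[OF pv] by simp
  then show ?thesis using e by (intro exI[of _ "e/2"]) simp
qed

lemma exist_s_ach:
  assumes pv: "prob_vec d p" and dl: "0 < \<delta>"
  shows "\<exists>s>0. (\<Sum>i<d. p i powr (1-s)) * 2 powr (-(s*(shannon d p + \<delta>))) < 1"
proof -
  have "0 < (shannon d p + \<delta> - shannon d p) * ln 2" using dl by simp
  from DERIV_pos_inc_left[OF F_deriv[OF pv] this] obtain e where e: "e > 0"
    and h: "\<And>h. h > 0 \<Longrightarrow> h < e \<Longrightarrow> (\<Sum>i<d. p i powr (1+(0-h))) * 2 powr ((0-h)*(shannon d p + \<delta>)) <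
       (\<Sum>i<d. p i powr (1+0)) * 2 powr (0*(shannon d p + \<delta>))" by blast
  have "(\<Sum>i<d. p i powr (1-e/2)) * 2 powr (-((e/2)*(shannon d p + \<delta>))) < 1"
    using h[of "e/2"] e F_zero[OF pv] by simp
  then show ?thesis using e by (intro exI[of _ "e/2"]) simp
qed



lemma pv_d0: "prob_vec d p \<Longrightarrow> 0 < d"
  unfolding prob_vec_def by (cases d) auto

lemma pw2: "(2::real) powr (real N * x) = (2 powr x)^N"
  by (simp add: powr_realpow[symmetric] powr_powr mult.commute)

lemma eventually_pow_small:
  assumes "0 \<le> r" "r < 1" "0 < e"
  shows "\<exists>N0. \<forall>N\<ge>N0. r^N < (e::real)"
proof -
  have "(\<lambda>N. r^N) \<longlonglongrightarrow> 0" using assms by (intro LIMSEQ_power_zero) auto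
  then have "eventually (\<lambda>N. r^N < e) sequentially" using assms(3) by (rule order_tendstoD)
  then show ?thesis by (simp add: eventually_sequentially)
qed

lemma ach:
  assumes pv: "prob_vec d p" and eps: "0 < eps" and dl: "0 < \<delta>"
  shows "\<exists>N0. \<forall>N\<ge>N0. \<exists>E D. scheme_ok d p N (nat \<lceil>real N * (shannon d p + \<delta>)\<rceil>) eps E D"
proof -
  define H where "H = shannon d p"
  have d0: "0 < d" using pv_d0[OF pv] .
  obtain s where s: "s > 0" and sr: "(\<Sum>i<d. p i powr (1-s)) * 2 powr (-(s*(H + \<delta>))) < 1"
    using exist_s_ach[OF pv dl] unfolding H_def by blast
  define r where "r = (\<Sum>i<d. p i powr (1-s)) * 2 powr (-(s*(H + \<delta>)))"
  have r0: "0 \<le> r" unfolding r_def by (intro mult_nonneg_nonneg sum_nonneg) auto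
  obtain N0 where N0: "\<And>N. N \<ge> N0 \<Longrightarrow> r^N < eps/2"
    using eventually_pow_small[OF r0 sr[folded r_def], of "eps/2"] eps by auto
  have "\<exists>E D. scheme_ok d p N (nat \<lceil>real N * (H + \<delta>)\<rceil>) eps E D" if N: "N \<ge> N0" for N
  proof -
    define n where "n = d^N"
    define q where "q = tpow d N p"
    define M where "M = nat \<lceil>real N * (H + \<delta>)\<rceil>"
    define \<tau> where "\<tau> = (2::real) powr (-(real N * (H + \<delta>)))"
    define S where "S = {k. k < n \<and> \<tau> \<le> q k}"
    have tau: "0 < \<tau>" unfolding \<tau>_def by simp
    have qnn: "\<And>k. 0 \<le> q k" unfolding q_def using pv d0 by (intro tpow_nonneg) (auto simp: prob_vec_def)
    have qs: "(\<Sum>k<n. q k) = 1" unfolding q_def n_def using tpow_sum[OF pv d0] by simp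
    have Ssub: "S \<subseteq> {..<n}" unfolding S_def by auto
    have fS: "finite S" using Ssub finite_subset by blast
    have "real (card S) * \<tau> = (\<Sum>k\<in>S. \<tau>)" by simp
    also have "\<dots> \<le> (\<Sum>k\<in>S. q k)" unfolding S_def by (intro sum_mono) auto
    also have "\<dots> \<le> (\<Sum>k<n. q k)" using Ssub qnn by (intro sum_mono2) auto
    finally have "real (card S) * \<tau> \<le> 1" using qs by simp
    then have "real (card S) \<le> 1 / \<tau>" using tau by (simp add: field_simps)
    also have "1 / \<tau> = 2 powr (real N * (H + \<delta>))" unfolding \<tau>_def by (simp add: powr_minus divide_inverse)
    also have "\<dots> \<le> 2 powr (real M)" unfolding M_def by (intro powr_mono) linarith+
    also have "\<dots> = 2 ^ M" by (simp add: powr_realpow)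
    finally have cS: "card S \<le> 2^M" by (metis of_nat_le_iff of_nat_numeral of_nat_power)
    have "(\<Sum>k<n. if k \<notin> S then q k else 0) = (\<Sum>k<n. if q k < \<tau> then q k else 0)"
      unfolding S_def by (intro sum.cong) auto
    also have "\<dots> \<le> \<tau> powr s * (\<Sum>k<n. q k powr (1-s))"
      using ltail_le[OF tau s] qnn by auto
    also have "(\<Sum>k<n. q k powr (1-s)) = (\<Sum>i<d. p i powr (1-s))^N"
      unfolding n_def q_def using tpow_powr_sum[OF d0] pv unfolding prob_vec_def by auto
    also have "\<tau> powr s = (2 powr (-(s*(H + \<delta>))))^N"
      unfolding \<tau>_def by (simp add: powr_powr pw2[symmetric] algebra_simps)
    finally have "(\<Sum>k<n. if k \<notin> S then q k else 0) \<le> r^N"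
      unfolding r_def by (simp add: power_mult_distrib mult.commute)
    then have "2 * (\<Sum>k<n. if k \<notin> S then q k else 0) < eps" using N0[OF N] by simp
    then show ?thesis using scheme_exists[OF pv d0 Ssub[unfolded n_def] cS] unfolding n_def q_def M_def by blast
  qed
  then show ?thesis unfolding H_def by blast
qed

lemma conv:
  assumes pv: "prob_vec d p" and eps: "eps < 1" and dl: "0 < \<delta>"
  shows "\<exists>N0. \<forall>N\<ge>N0. \<forall>M E D. scheme_ok d p N M eps E D \<longrightarrow> real N * (shannon d p - 2*\<delta>) < real M"
proof -
  define H where "H = shannon d p"
  have d0: "0 < d" using pv_d0[OF pv] .
  obtain s where s: "s > 0" and sr: "(\<Sum>i<d. p i powr (1+s)) * 2 powr (s*(H - \<delta>)) < 1"
    using exist_s_conv[OF pv dl] unfolding H_def by blast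
  define r where "r = (\<Sum>i<d. p i powr (1+s)) * 2 powr (s*(H - \<delta>))"
  have r0: "0 \<le> r" unfolding r_def by (intro mult_nonneg_nonneg sum_nonneg) auto
  define r2 where "r2 = (2::real) powr (-\<delta>)"
  have r20: "0 \<le> r2" "r2 < 1" unfolding r2_def using dl by (auto simp: powr_minus inverse_less_1_iff)
  have "(\<lambda>N. r^N + r2^N) \<longlonglongrightarrow> 0 + 0"
    using r0 sr[folded r_def] r20 by (intro tendsto_add LIMSEQ_power_zero) auto
  then have "eventually (\<lambda>N. r^N + r2^N < 1 - eps) sequentially" using eps
    by (intro order_tendstoD) auto
  then obtain N0 where N0: "\<And>N. N \<ge> N0 \<Longrightarrow> r^N + r2^N < 1 - eps" by (auto simp: eventually_sequentially)
  have "real N * (H - 2*\<delta>) < real M" if N: "N \<ge> N0" and ok: "scheme_ok d p N M eps E D" for N M E D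
  proof (rule ccontr)
    assume "\<not> real N * (H - 2*\<delta>) < real M"
    then have Mle: "real M \<le> real N * (H - 2*\<delta>)" by simp
    define n where "n = d^N"
    define q where "q = tpow d N p"
    define \<tau> where "\<tau> = (2::real) powr (-(real N * (H - \<delta>)))"
    have tau: "0 < \<tau>" unfolding \<tau>_def by simp
    have qnn: "\<forall>k<n. 0 \<le> q k" unfolding q_def using pv d0 by (auto intro!: tpow_nonneg simp: prob_vec_def)
    have sE: "stochastic n (2^M) E" and sD: "stochastic (2^M) n D"
      using ok unfolding scheme_ok_def n_def by auto
    have "1 - eps < (\<Sum>k<n. q k * mat_comp (2^M) D E k k)"
      using success_from_scheme[OF pv d0 ok] unfolding n_def q_def .
    also have "\<dots> \<le> (\<Sum>k<n. if \<tau> < q k then q k else 0) + \<tau> * real (2^M)"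
      by (rule success_le[OF sE sD qnn tau])
    also have "(\<Sum>k<n. if \<tau> < q k then q k else 0) \<le> \<tau> powr (-s) * (\<Sum>k<n. q k powr (1+s))"
      by (rule tail_le[OF tau s qnn])
    also have "(\<Sum>k<n. q k powr (1+s)) = (\<Sum>i<d. p i powr (1+s))^N"
      unfolding n_def q_def using tpow_powr_sum[OF d0] pv unfolding prob_vec_def by auto
    also have "\<tau> powr (-s) = (2 powr (s*(H - \<delta>)))^N"
      unfolding \<tau>_def by (simp add: powr_powr pw2[symmetric] algebra_simps)
    also have "\<tau> * real (2^M) = 2 powr (real M - real N * (H - \<delta>))"
    proof -
      have "\<tau> * real (2^M) = 2 powr (-(real N * (H - \<delta>))) * 2 powr (real M)"
        unfolding \<tau>_def by (simp add: powr_realpow)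
      also have "\<dots> = 2 powr (-(real N * (H - \<delta>)) + real M)" by (rule powr_add[symmetric])
      also have "-(real N * (H - \<delta>)) + real M = real M - real N * (H - \<delta>)" by simp
      finally show ?thesis .
    qed
    also have "\<dots> \<le> 2 powr (real N * (-\<delta>))"
      using Mle by (intro powr_mono) (auto simp: algebra_simps)
    also have "\<dots> = r2^N" unfolding r2_def by (rule pw2)
    finally have "1 - eps < r^N + r2^N" unfolding r_def by (simp add: power_mult_distrib mult.commute)
    then show False using N0[OF N] by simp
  qed
  then show ?thesis unfolding H_def by blast
qed



lemma shannon_nonneg: "prob_vec d p \<Longrightarrow> 0 \<le> shannon d p"
proof -
  assume pv: "prob_vec d p"
  have "p i * log 2 (p i) \<le> 0" if i: "i < d" "p i \<noteq> 0" for i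
  proof -
    have "0 \<le> p i" using pv i unfolding prob_vec_def by simp
    then have p0: "0 < p i" using i by simp
    have "p i \<le> (\<Sum>i<d. p i)" using pv i unfolding prob_vec_def by (intro member_le_sum) auto
    then have "p i \<le> 1" using pv unfolding prob_vec_def by simp
    then have "log 2 (p i) \<le> 0" using p0 by simp
    then show ?thesis using p0 by (simp add: mult_nonneg_nonpos)
  qed
  then show ?thesis unfolding shannon_def by (auto intro!: sum_nonpos)
qed

lemma rate_const:
  assumes pv: "prob_vec d p" and eps: "0 < eps" "eps < 1"
  shows "info_rate d p eps = ereal (shannon d p)"
proof -
  define H where "H = shannon d p"
  have H0: "0 \<le> H" unfolding H_def by (rule shannon_nonneg[OF pv])
  define X where "X N = real (min_bits d p N eps) / real N" for N
  have "X \<longlonglongrightarrow> H"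
  proof (rule LIMSEQ_I)
    fix r :: real assume r: "0 < r"
    define \<delta> where "\<delta> = r/3"
    have dl: "0 < \<delta>" unfolding \<delta>_def using r by simp
    obtain N1 where N1: "\<And>N. N \<ge> N1 \<Longrightarrow> \<exists>E D. scheme_ok d p N (nat \<lceil>real N * (H + \<delta>)\<rceil>) eps E D"
      using ach[OF pv eps(1) dl] unfolding H_def by blast
    obtain N2 where N2: "\<And>N M E D. N \<ge> N2 \<Longrightarrow> scheme_ok d p N M eps E D \<Longrightarrow> real N * (H - 2*\<delta>) < real M"
      using conv[OF pv eps(2) dl] unfolding H_def by blast
    define N3 where "N3 = max (max N1 N2) (nat \<lceil>1/\<delta>\<rceil> + 1)"
    have "norm (X N - H) < r" if N: "N \<ge> N3" for N
    proof -
      have n1: "N \<ge> N1" "N \<ge> N2" using N unfolding N3_def by auto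
      have "real N \<ge> real (nat \<lceil>1/\<delta>\<rceil> + 1)" using N unfolding N3_def by simp
      then have Nbig: "real N > 1/\<delta>" by linarith
      have "0 < 1/\<delta>" using dl by simp
      then have Npos: "real N > 0" using Nbig by linarith
      have invN: "1 / real N < \<delta>" using Nbig dl Npos by (simp add: field_simps)
      define M0 where "M0 = nat \<lceil>real N * (H + \<delta>)\<rceil>"
      have ex: "\<exists>E D. scheme_ok d p N M0 eps E D" using N1[OF n1(1)] unfolding M0_def .
      have le: "min_bits d p N eps \<le> M0" unfolding min_bits_def using ex by (intro Least_le) blast
      have "\<exists>E D. scheme_ok d p N (min_bits d p N eps) eps E D" unfolding min_bits_def
        using ex by (intro LeastI_ex[where P="\<lambda>M. \<exists>E D. scheme_ok d p N M eps E D"]) blast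
      then have lo: "real N * (H - 2*\<delta>) < real (min_bits d p N eps)" using N2[OF n1(2)] by blast
      have x0: "0 \<le> real N * (H + \<delta>)" using H0 dl Npos by simp
      then have "real M0 = of_int \<lceil>real N * (H + \<delta>)\<rceil>" unfolding M0_def by simp
      also have "\<dots> \<le> real N * (H + \<delta>) + 1" using ceiling_correct[of "real N * (H + \<delta>)"] by linarith
      finally have "real M0 \<le> real N * (H + \<delta>) + 1" .
      then have hi: "real (min_bits d p N eps) \<le> real N * (H + \<delta>) + 1" using le by linarith
      have "X N \<le> H + \<delta> + 1 / real N" unfolding X_def using hi Npos by (simp add: field_simps)
      moreover have "X N > H - 2*\<delta>" unfolding X_def using lo Npos by (simp add: field_simps)
      ultimately have "X N - H < r" "H - X N < r" using invN \<delta>_def by linarith+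
      then show ?thesis by (simp add: abs_less_iff)
    qed
    then show "\<exists>no. \<forall>n\<ge>no. norm (X n - H) < r" by blast
  qed
  then have "(\<lambda>N. ereal (X N)) \<longlonglongrightarrow> ereal H" by (rule tendsto_ereal)
  then have "limsup (\<lambda>N. ereal (X N)) = ereal H" by (intro lim_imp_Limsup) auto
  then show ?thesis unfolding info_rate_def X_def H_def .
qed

theorem mainTheorem15:
  fixes d :: nat and p :: "nat \<Rightarrow> real"
  assumes "prob_vec d p"
  shows "((\<lambda>eps. info_rate d p eps) \<longlongrightarrow> ereal (shannon d p)) (at_right 0)"
proof (rule tendsto_eventually)
  have "eventually (\<lambda>x. x \<in> {0<..<1::real}) (at_right 0)" by (rule eventually_at_right_real) simp
  then show "eventually (\<lambda>eps. info_rate d p eps = ereal (shannon d p)) (at_right 0)"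
    by (rule eventually_mono) (auto intro: rate_const[OF assms])
qed

end
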